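(* Let $n\ge 3$ and let $O$ be an optimal acyclic matching on the $(n-2)$-skeleton $\Delta^n_{(n-2)}$ of $\Delta^n$. Let $U$ be the set of critical $(n-2)$-dimensional simplices of $O$. Let $F_0,\dots,F_n$ be the $(n-1)$-dimensional simplices of $\Delta^n$, and let $K_{n+1}$ be the complete graph on the vertex set $\{F_0,\dots,F_n\}$. Identify each $(n-2)$-simplex $u$ of $\Delta^n$ with the edge $\{F_i,F_j\}$ of $K_{n+1}$, where $F_i,F_j$ are the two $(n-1)$-simplices of $\Delta^n$ containing $u$ (this is a bijection between $(n-2)$-simplices of $\Delta^n$ and edges of $K_{n+1}$). Then $|U|=n$ and, under this identification, $U$ is the edge set of a spanning tree of $K_{n+1}$.
   Context: All simplicial complexes are finite abstract simplicial complexes; simplices are nonempty. $\Delta^n$ is the simplicial complex of all nonempty subsets of an $(n+1)$-element vertex set; $\Delta^n_{(k)}$ denotes its $k$-skeleton (simplices of dimension $\le k$). The Hasse diagram $\mathcal{H}(K)$ of $K$ is the directed graph whose vertices are the simplices of $K$, with an edge $\sigma\to\tau$ whenever $\sigma\subsetneq\tau$ and $\dim\tau=\dim\sigma+1$. A matching on $\mathcal{H}(K)$ is a set $W$ of edges of $\mathcal{H}(K)$, no two sharing a vertex; an edge $\sigma\to\tau$ in $W$ is called a pair $(\sigma,\tau)$, and a simplex lying in no pair is called critical. $W$ is acyclic if the directed graph obtained from $\mathcal{H}(K)$ by reversing every edge in $W$ has no directed cycle. An acyclic matching is optimal if it minimizes the total number of critical simplices among all acyclic matchings on $K$. *)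

theory Defs
  imports Main
begin

(* Abstract simplicial complexes: a complex is a set of nonempty finite vertex sets.
   dim s = card s - 1. *)

definition simplex_full :: "nat \<Rightarrow> nat set set" where
  "simplex_full n = {s. s \<noteq> {} \<and> s \<subseteq> {0..n}}"

definition skeleton :: "nat \<Rightarrow> nat \<Rightarrow> nat set set" where
  "skeleton n k = {s \<in> simplex_full n. card s \<le> k + 1}"

definition hasse_edges :: "'a set set \<Rightarrow> ('a set \<times> 'a set) set" where
  "hasse_edges K = {(s, t). s \<in> K \<and> t \<in> K \<and> s \<subset> t \<and> card t = card s + 1}"

definition is_matching :: "'a set set \<Rightarrow> ('a set \<times> 'a set) set \<Rightarrow> bool" where
  "is_matching K W \<longleftrightarrow> W \<subseteq> hasse_edges K \<and>
     (\<forall>p\<in>W. \<forall>q\<in>W. p \<noteq> q \<longrightarrow> {fst p, snd p} \<inter> {fst q, snd q} = {})"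

definition modified_hasse :: "'a set set \<Rightarrow> ('a set \<times> 'a set) set \<Rightarrow> ('a set \<times> 'a set) set" where
  "modified_hasse K W = (hasse_edges K - W) \<union> W\<inverse>"

definition is_acyclic_matching :: "'a set set \<Rightarrow> ('a set \<times> 'a set) set \<Rightarrow> bool" where
  "is_acyclic_matching K W \<longleftrightarrow> is_matching K W \<and> acyclic (modified_hasse K W)"

definition critical :: "'a set set \<Rightarrow> ('a set \<times> 'a set) set \<Rightarrow> 'a set set" where
  "critical K W = {s \<in> K. \<forall>p\<in>W. s \<noteq> fst p \<and> s \<noteq> snd p}"

definition is_optimal_matching :: "'a set set \<Rightarrow> ('a set \<times> 'a set) set \<Rightarrow> bool" where
  "is_optimal_matching K W \<longleftrightarrow> is_acyclic_matching K W \<and>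
     (\<forall>W'. is_acyclic_matching K W' \<longrightarrow> card (critical K W) \<le> card (critical K W'))"

definition is_graph :: "'v set \<Rightarrow> 'v set set \<Rightarrow> bool" where
  "is_graph V E \<longleftrightarrow> (\<forall>e\<in>E. e \<subseteq> V \<and> card e = 2)"

definition adj :: "'v set set \<Rightarrow> ('v \<times> 'v) set" where
  "adj E = {(x, y). {x, y} \<in> E \<and> x \<noteq> y}"

definition graph_connected :: "'v set \<Rightarrow> 'v set set \<Rightarrow> bool" where
  "graph_connected V E \<longleftrightarrow> (\<forall>x\<in>V. \<forall>y\<in>V. (x, y) \<in> (adj E)\<^sup>*)"

definition has_cycle :: "'v set set \<Rightarrow> bool" where
  "has_cycle E \<longleftrightarrow> (\<exists>vs. length vs \<ge> 3 \<and> distinct vs \<and>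
      (\<forall>i < length vs - 1. {vs ! i, vs ! (i + 1)} \<in> E) \<and> {last vs, hd vs} \<in> E)"

definition is_spanning_tree :: "'v set \<Rightarrow> 'v set set \<Rightarrow> bool" where
  "is_spanning_tree V T \<longleftrightarrow> is_graph V T \<and> graph_connected V T \<and> \<not> has_cycle T"

(* facets of Delta^n: the (n-1)-simplices, i.e. vertex sets of size n; these are the
   vertices of K_{n+1} *)
definition facets :: "nat \<Rightarrow> nat set set" where
  "facets n = {F \<in> simplex_full n. card F = n}"

(* identification of an (n-2)-simplex u with the edge {F_i,F_j} of K_{n+1}:
   the set of facets containing u *)
definition edge_of :: "nat \<Rightarrow> nat set \<Rightarrow> nat set set" where
  "edge_of n u = {F \<in> facets n. u \<subseteq> F}"

end

theory Submission
  imports Defs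
begin


definition cut_cond :: "'v set \<Rightarrow> 'v set set \<Rightarrow> bool" where
  "cut_cond V E \<longleftrightarrow> (\<forall>S. S \<subseteq> V \<and> S \<noteq> {} \<and> S \<noteq> V \<longrightarrow> (\<exists>a\<in>S. \<exists>b\<in>V - S. {a,b} \<in> E))"

lemma cut_grow:
  assumes "finite V" "is_graph V E" "cut_cond V E"
  shows "k \<ge> 1 \<Longrightarrow> k \<le> card V \<Longrightarrow> \<exists>S. S \<subseteq> V \<and> card S = k \<and> k \<le> card (E \<inter> Pow S) + 1"
proof (induction k)
  case 0 then show ?case by simp
next
  case (Suc k)
  show ?case
  proof (cases "k = 0")
    case True
    from Suc.prems have "V \<noteq> {}" by auto
    then obtain x where "x \<in> V" by auto
    then show ?thesis using True by (intro exI[of _ "{x}"]) auto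
  next
    case False
    then obtain S where S: "S \<subseteq> V" "card S = k" "k \<le> card (E \<inter> Pow S) + 1"
      using Suc by auto
    have fS: "finite S" using S(1) assms(1) finite_subset by blast
    have "S \<noteq> {}" using S False by auto
    moreover have "S \<noteq> V" using S Suc.prems by auto
    ultimately obtain a b where ab: "a \<in> S" "b \<in> V - S" "{a,b} \<in> E"
      using assms(3) S(1) unfolding cut_cond_def by blast
    let ?S = "insert b S"
    have c1: "card ?S = Suc k" using ab fS S by simp
    have c2: "?S \<subseteq> V" using ab S by auto
    have s3: "insert {a,b} (E \<inter> Pow S) \<subseteq> E \<inter> Pow ?S" using ab by auto
    have s4: "{a,b} \<notin> E \<inter> Pow S" using ab by auto
    have f5: "finite (E \<inter> Pow ?S)" using fS by auto
    have "card (insert {a,b} (E \<inter> Pow S)) \<le> card (E \<inter> Pow ?S)"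
      using s3 f5 by (rule card_mono[rotated])
    moreover have "card (insert {a,b} (E \<inter> Pow S)) = Suc (card (E \<inter> Pow S))"
      using s4 fS by simp
    ultimately show ?thesis using c1 c2 S(3) by (intro exI[of _ ?S]) auto
  qed
qed

lemma cut_card:
  assumes "finite V" "is_graph V E" "cut_cond V E"
  shows "card V \<le> card E + 1"
proof (cases "V = {}")
  case True then show ?thesis by simp
next
  case False
  then have "card V \<ge> 1" using assms(1) by (simp add: Suc_leI card_gt_0_iff)
  then obtain S where S: "S \<subseteq> V" "card S = card V" "card V \<le> card (E \<inter> Pow S) + 1"
    using cut_grow[OF assms] by blast
  have "S = V" using S assms(1) card_subset_eq by blast
  moreover have "E \<subseteq> Pow V" using assms(2) unfolding is_graph_def by auto
  ultimately show ?thesis using S(3) by (simp add: Int_absorb2)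
qed

lemma cut_connected:
  assumes "cut_cond V E"
  shows "graph_connected V E"
  unfolding graph_connected_def
proof (intro ballI)
  fix x y assume x: "x \<in> V" and y: "y \<in> V"
  let ?S = "{z \<in> V. (x, z) \<in> (adj E)\<^sup>*}"
  show "(x, y) \<in> (adj E)\<^sup>*"
  proof (rule ccontr)
    assume "(x, y) \<notin> (adj E)\<^sup>*"
    then have "?S \<noteq> V" using y by auto
    moreover have "?S \<noteq> {}" using x by auto
    moreover have "?S \<subseteq> V" by auto
    moreover from assms have "?S \<subseteq> V \<and> ?S \<noteq> {} \<and> ?S \<noteq> V \<longrightarrow> (\<exists>a\<in>?S. \<exists>b\<in>V - ?S. {a,b} \<in> E)"
      unfolding cut_cond_def by (rule spec)
    ultimately obtain a b where ab: "a \<in> ?S" "b \<in> V - ?S" "{a,b} \<in> E"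
      by blast
    have "a \<noteq> b" using ab by auto
    then have "(a,b) \<in> adj E" using ab(3) unfolding adj_def by auto
    moreover have "(x,a) \<in> (adj E)\<^sup>*" using ab(1) by simp
    ultimately have "(x,b) \<in> (adj E)\<^sup>*" by (rule rtrancl_into_rtrancl[rotated])
    then show False using ab(2) by auto
  qed
qed

lemma path_cross:
  "P (f 0) \<Longrightarrow> \<not> P (f m) \<Longrightarrow> \<exists>i<m. P (f i) \<and> \<not> P (f (Suc i))"
proof (induction m)
  case 0 then show ?case by simp
next
  case (Suc m)
  show ?case
  proof (cases "P (f m)")
    case True then show ?thesis using Suc by auto
  next
    case False then show ?thesis using Suc by (meson less_Suc_eq)
  qed
qed

lemma cycle_cut:
  assumes "is_graph V E" "cut_cond V E" "has_cycle E"
  shows "\<exists>e\<in>E. cut_cond V (E - {e})"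
proof -
  obtain vs where vs: "length vs \<ge> 3" "distinct vs"
    "\<forall>i < length vs - 1. {vs ! i, vs ! (i + 1)} \<in> E" "{last vs, hd vs} \<in> E"
    using assms(3) unfolding has_cycle_def by blast
  define m where "m = length vs - 1"
  have hd: "hd vs = vs ! 0" using vs(1) by (cases vs) auto
  have lst: "last vs = vs ! m" using vs(1) unfolding m_def by (subst last_conv_nth) auto
  have vne: "vs \<noteq> []" using vs(1) by auto
  have m2: "m \<ge> 2" "m < length vs" using vs(1) unfolding m_def by auto
  let ?e = "{last vs, hd vs}"
  have d: "vs ! p = vs ! q \<longleftrightarrow> p = q" if "p < length vs" "q < length vs" for p q
    using vs(2) that nth_eq_iff_index_eq by blast
  have ne: "{vs ! i, vs ! Suc i} \<noteq> ?e" if "i < m" for i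
  proof
    assume eq: "{vs ! i, vs ! Suc i} = ?e"
    have il: "i < length vs" "Suc i < length vs" using that m2 by auto
    from eq have "(vs ! i = vs ! m \<and> vs ! Suc i = vs ! 0) \<or> (vs ! i = vs ! 0 \<and> vs ! Suc i = vs ! m)"
      unfolding hd lst doubleton_eq_iff by blast
    then show False
    proof
      assume "vs ! i = vs ! m \<and> vs ! Suc i = vs ! 0"
      moreover have "vs ! Suc i = vs ! 0 \<longleftrightarrow> Suc i = 0" using d[of "Suc i" 0] il m2 vne by simp
      ultimately have "Suc i = 0" by simp
      then show False by simp
    next
      assume "vs ! i = vs ! 0 \<and> vs ! Suc i = vs ! m"
      moreover have "vs ! i = vs ! 0 \<longleftrightarrow> i = 0" using d[of i 0] il m2 vne by simp
      moreover have "vs ! Suc i = vs ! m \<longleftrightarrow> Suc i = m" using d[of "Suc i" m] il m2 by simp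
      ultimately have "i = 0" "Suc i = m" by simp_all
      then show False using m2 by simp
    qed
  qed
  have edge: "{vs ! i, vs ! Suc i} \<in> E" if "i < m" for i
    using vs(3) that unfolding m_def by auto
  have inV: "vs ! i \<in> V \<and> vs ! Suc i \<in> V" if "i < m" for i
    using edge[OF that] assms(1) unfolding is_graph_def by auto
  have "cut_cond V (E - {?e})"
    unfolding cut_cond_def
  proof (intro allI impI)
    fix S assume S: "S \<subseteq> V \<and> S \<noteq> {} \<and> S \<noteq> V"
    moreover from assms(2) have "S \<subseteq> V \<and> S \<noteq> {} \<and> S \<noteq> V \<longrightarrow> (\<exists>a\<in>S. \<exists>b\<in>V - S. {a,b} \<in> E)"
      unfolding cut_cond_def by (rule spec)
    ultimately obtain a b where ab: "a \<in> S" "b \<in> V - S" "{a,b} \<in> E"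
      by blast
    show "\<exists>a\<in>S. \<exists>b\<in>V - S. {a, b} \<in> E - {?e}"
    proof (cases "{a,b} = ?e")
      case False then show ?thesis using ab by blast
    next
      case True
      then have "(vs ! 0 \<in> S \<and> vs ! m \<notin> S) \<or> (vs ! 0 \<notin> S \<and> vs ! m \<in> S)"
        using ab unfolding hd lst doubleton_eq_iff by blast
      then show ?thesis
      proof
        assume h: "vs ! 0 \<in> S \<and> vs ! m \<notin> S"
        then obtain i where i: "i < m" "vs ! i \<in> S" "vs ! Suc i \<notin> S"
          using path_cross[of "\<lambda>z. z \<in> S" "\<lambda>i. vs ! i" m] by auto
        have "vs ! Suc i \<in> V - S" using inV[OF i(1)] i(3) by simp
        moreover have "{vs ! i, vs ! Suc i} \<in> E - {?e}" using edge[OF i(1)] ne[OF i(1)] by simp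
        ultimately show ?thesis using i(2) by blast
      next
        assume h: "vs ! 0 \<notin> S \<and> vs ! m \<in> S"
        then obtain i where i: "i < m" "vs ! i \<notin> S" "vs ! Suc i \<in> S"
          using path_cross[of "\<lambda>z. z \<notin> S" "\<lambda>i. vs ! i" m] by auto
        have "vs ! i \<in> V - S" using inV[OF i(1)] i(2) by simp
        moreover have "{vs ! Suc i, vs ! i} \<in> E - {?e}" using edge[OF i(1)] ne[OF i(1)]
          by (simp add: insert_commute)
        ultimately show ?thesis using i(3) by blast
      qed
    qed
  qed
  then show ?thesis using vs(4) by blast
qed

lemma cut_no_cycle:
  assumes "finite V" "is_graph V E" "cut_cond V E" "card E + 1 = card V"
  shows "\<not> has_cycle E"
proof
  assume "has_cycle E"
  then obtain e where e: "e \<in> E" "cut_cond V (E - {e})" using cycle_cut assms by blast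
  have "is_graph V (E - {e})" using assms(2) unfolding is_graph_def by auto
  then have "card V \<le> card (E - {e}) + 1" using cut_card assms(1) e(2) by blast
  moreover have "finite E" using assms(1,2) unfolding is_graph_def
    by (meson Pow_iff finite_Pow_iff finite_subset subsetI)
  moreover have "card (E - {e}) + 1 = card E" using e(1) \<open>finite E\<close>
    by (metis One_nat_def Suc_pred add.right_neutral add_Suc_right card_Diff_singleton card_gt_0_iff empty_iff)
  ultimately show False using assms(4) by simp
qed



lemma K_mem:
  assumes "n \<ge> 3"
  shows "s \<in> skeleton n (n-2) \<longleftrightarrow> s \<noteq> {} \<and> s \<subseteq> {0..n} \<and> card s \<le> n - 1"
proof -
  have e: "n - 2 + 1 = n - 1" using assms by simp
  show ?thesis unfolding skeleton_def simplex_full_def e by simp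
qed

lemma no_acyclic_succ:
  assumes "finite C" "C \<noteq> {}" "\<forall>x\<in>C. \<exists>y\<in>C. (x,y) \<in> R\<^sup>+"
  shows "\<not> acyclic R"
proof
  assume ac: "acyclic R"
  let ?Q = "R\<^sup>+ \<inter> (C \<times> C)"
  have "finite (C \<times> C)" using assms(1) by simp
  then have fin: "finite ?Q" by (rule finite_subset[rotated]) simp
  have "?Q\<^sup>+ \<subseteq> (R\<^sup>+)\<^sup>+" by (rule trancl_mono_subset) simp
  then have sub: "?Q\<^sup>+ \<subseteq> R\<^sup>+" by simp
  have "acyclic ?Q" unfolding acyclic_def
  proof
    fix x show "(x,x) \<notin> ?Q\<^sup>+" using sub ac unfolding acyclic_def by auto
  qed
  then have "acyclic (?Q\<inverse>)" by simp
  moreover have "finite (?Q\<inverse>)" using fin by simp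
  ultimately have wfq: "wf (?Q\<inverse>)" by (rule finite_acyclic_wf[rotated])
  obtain x0 where x0: "x0 \<in> C" using assms(2) by auto
  have "\<exists>z\<in>C. \<forall>y. (y, z) \<in> ?Q\<inverse> \<longrightarrow> y \<notin> C"
    using wfq[unfolded wf_eq_minimal, rule_format, OF x0] .
  then obtain z where z: "z \<in> C" "\<forall>y. (y, z) \<in> ?Q\<inverse> \<longrightarrow> y \<notin> C" by blast
  from assms(3) z(1) obtain y where y: "y \<in> C" "(z,y) \<in> R\<^sup>+" by blast
  have "(y, z) \<in> ?Q\<inverse>" using y z(1) by simp
  then show False using z(2) y(1) by blast
qed

lemma match_uniq:
  assumes "is_matching K W" "p \<in> W" "q \<in> W" "fst p = fst q \<or> snd p = snd q"
  shows "p = q"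
proof -
  have "\<forall>p\<in>W. \<forall>q\<in>W. p \<noteq> q \<longrightarrow> {fst p, snd p} \<inter> {fst q, snd q} = {}"
    using assms(1) unfolding is_matching_def by (rule conjunct2)
  then have "p \<noteq> q \<Longrightarrow> {fst p, snd p} \<inter> {fst q, snd q} = {}"
    using assms(2,3) by blast
  then show ?thesis using assms(4) by auto
qed

lemma mh_step:
  assumes "is_matching K W" "(s, x) \<in> W" "(s, y) \<in> hasse_edges K" "y \<noteq> x"
  shows "(x, y) \<in> (modified_hasse K W)\<^sup>+"
proof -
  have "(s,y) \<notin> W" using match_uniq[OF assms(1) assms(2), of "(s,y)"] assms(4) by auto
  then have "(s,y) \<in> modified_hasse K W" using assms(3) unfolding modified_hasse_def by auto
  moreover have "(x,s) \<in> modified_hasse K W" using assms(2) unfolding modified_hasse_def by auto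
  ultimately show ?thesis by (meson r_into_trancl trancl_into_trancl)
qed

lemma mh_step2:
  assumes "is_matching K W" "(a, e) \<in> W" "(b, e) \<in> hasse_edges K" "b \<noteq> a"
  shows "(b, a) \<in> (modified_hasse K W)\<^sup>+"
proof -
  have "(b,e) \<notin> W" using match_uniq[OF assms(1) assms(2), of "(b,e)"] assms(4) by auto
  then have "(b,e) \<in> modified_hasse K W" using assms(3) unfolding modified_hasse_def by auto
  moreover have "(e,a) \<in> modified_hasse K W" using assms(2) unfolding modified_hasse_def by auto
  ultimately show ?thesis by (meson r_into_trancl trancl_into_trancl)
qed

lemma vertex_critical:
  assumes n: "n \<ge> 3" and W: "is_acyclic_matching (skeleton n (n-2)) W"
  shows "\<exists>v\<in>{0..n}. {v} \<in> critical (skeleton n (n-2)) W"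
proof (rule ccontr)
  assume H: "\<not> ?thesis"
  let ?K = "skeleton n (n-2)"
  let ?R = "modified_hasse ?K W"
  let ?C = "(\<lambda>v. {v}) ` {0..n}"
  have M: "is_matching ?K W" using W unfolding is_acyclic_matching_def by auto
  have "\<forall>x\<in>?C. \<exists>y\<in>?C. (x,y) \<in> (?R\<inverse>)\<^sup>+"
  proof
    fix x assume "x \<in> ?C"
    then obtain v where v: "v \<in> {0..n}" "x = {v}" by auto
    have vK: "{v} \<in> ?K" using v n by (simp add: K_mem)
    have "{v} \<notin> critical ?K W" using H v by blast
    then have "\<not> (\<forall>p\<in>W. {v} \<noteq> fst p \<and> {v} \<noteq> snd p)" using vK unfolding critical_def by simp
    then obtain p where p: "p \<in> W" "{v} = fst p \<or> {v} = snd p" by blast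
    obtain a e where pae: "p = (a, e)" by (cases p)
    have pe: "(a, e) \<in> hasse_edges ?K" using p pae M unfolding is_matching_def by auto
    then have ae: "a \<in> ?K" "e \<in> ?K" "a \<subset> e" "card e = card a + 1"
      unfolding hasse_edges_def by auto
    have "a \<noteq> {}" using ae(1) n by (simp add: K_mem)
    then have "{v} \<noteq> e" using ae(3) by (auto simp: psubset_eq subset_singleton_iff)
    then have av: "a = {v}" using p pae by auto
    have fe: "finite e" using ae(2) n by (meson K_mem finite_atLeastAtMost finite_subset)
    have ce: "card e = 2" using ae(4) av by simp
    have ve: "v \<in> e" using ae(3) av by auto
    have "card (e - {v}) = 1" using ce ve by (simp add: card_Diff_singleton)
    then obtain w where w: "e - {v} = {w}" by (rule card_1_singletonE)
    have wv: "w \<noteq> v" using w by auto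
    have we: "w \<in> e" using w by auto
    have "e \<subseteq> {0..n}" using ae(2) n by (simp add: K_mem)
    then have wA: "w \<in> {0..n}" using we by auto
    have wK: "{w} \<in> ?K" using wA n by (simp add: K_mem)
    have "v \<in> e" using ae(3) av by auto
    then have "{w} \<subset> e" using we wv by auto
    then have "({w}, e) \<in> hasse_edges ?K" using wK ae(2) ce unfolding hasse_edges_def by auto
    moreover have "(a, e) \<in> W" using p pae by simp
    ultimately have "({w}, {v}) \<in> ?R\<^sup>+" using mh_step2[OF M] av wv by auto
    then have "({v}, {w}) \<in> (?R\<inverse>)\<^sup>+" by (simp add: trancl_converse)
    then show "\<exists>y\<in>?C. (x,y) \<in> (?R\<inverse>)\<^sup>+" using wA v by blast
  qed
  moreover have "finite ?C" by simp
  moreover have "?C \<noteq> {}" by simp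
  ultimately have "\<not> acyclic (?R\<inverse>)" using no_acyclic_succ by blast
  then show False using W unfolding is_acyclic_matching_def by simp
qed

lemma facets_eq:
  assumes "n \<ge> 1"
  shows "facets n = (\<lambda>i. {0..n} - {i}) ` {0..n}"
proof
  show "facets n \<subseteq> (\<lambda>i. {0..n} - {i}) ` {0..n}"
  proof
    fix F assume "F \<in> facets n"
    then have F: "F \<subseteq> {0..n}" "card F = n" unfolding facets_def simplex_full_def by auto
    have "finite F" using F(1) finite_subset by blast
    then have "card ({0..n} - F) = 1" using F by (simp add: card_Diff_subset)
    then obtain i where i: "{0..n} - F = {i}" by (rule card_1_singletonE)
    then have "i \<in> {0..n}" by auto
    moreover have "F = {0..n} - {i}" using F(1) i by auto
    ultimately show "F \<in> (\<lambda>i. {0..n} - {i}) ` {0..n}" by auto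
  qed
next
  show "(\<lambda>i. {0..n} - {i}) ` {0..n} \<subseteq> facets n"
  proof
    fix F assume "F \<in> (\<lambda>i. {0..n} - {i}) ` {0..n}"
    then obtain i where i: "i \<in> {0..n}" "F = {0..n} - {i}" by auto
    have c: "card F = n" using i by simp
    then have "F \<noteq> {}" using assms by auto
    then show "F \<in> facets n" using c i unfolding facets_def simplex_full_def by auto
  qed
qed

lemma card_top:
  assumes "i \<le> n" "j \<le> n" "i \<noteq> j"
  shows "card ({0..n} - {i,j}) = n - 1"
  using assms by (simp add: card_Diff_subset)

lemma top_rep:
  assumes "n \<ge> 1" "u \<subseteq> {0..n}" "card u = n - 1"
  obtains i j where "i \<le> n" "j \<le> n" "i \<noteq> j" "u = {0..n} - {i,j}"
proof -
  have "finite u" using assms(2) finite_subset by blast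
  then have "card ({0..n} - u) = 2" using assms by (simp add: card_Diff_subset)
  then obtain i j where ij: "{0..n} - u = {i,j}" "i \<noteq> j" by (auto simp: card_2_iff)
  then have "i \<le> n" "j \<le> n" by auto
  moreover have "u = {0..n} - {i,j}" using ij(1) assms(2) by auto
  ultimately show ?thesis using that ij(2) by blast
qed

lemma edge_of_rep:
  assumes "n \<ge> 1" "i \<le> n" "j \<le> n" "i \<noteq> j"
  shows "edge_of n ({0..n} - {i,j}) = {{0..n} - {i}, {0..n} - {j}}"
proof (intro equalityI subsetI)
  fix F assume F: "F \<in> edge_of n ({0..n} - {i,j})"
  then have F1: "F \<in> (\<lambda>k. {0..n} - {k}) ` {0..n}" and F2: "{0..n} - {i,j} \<subseteq> F"
    unfolding edge_of_def facets_eq[OF assms(1)] by simp_all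
  from F1 obtain k where k: "k \<in> {0..n}" "F = {0..n} - {k}" by (rule imageE)
  have "k \<in> {i,j}"
  proof (rule ccontr)
    assume "k \<notin> {i,j}"
    then have "k \<in> {0..n} - {i,j}" using k(1) by simp
    then have "k \<in> F" using F2 by blast
    then show False using k(2) by simp
  qed
  then show "F \<in> {{0..n} - {i}, {0..n} - {j}}" using k(2) by auto
next
  fix F assume F: "F \<in> {{0..n} - {i}, {0..n} - {j}}"
  then obtain k where k: "k \<in> {i,j}" "F = {0..n} - {k}" by auto
  have "k \<in> {0..n}" using k(1) assms by auto
  then have "F \<in> (\<lambda>k. {0..n} - {k}) ` {0..n}" using k(2) by (intro image_eqI)
  moreover have "{0..n} - {i,j} \<subseteq> F" using k by auto
  ultimately show "F \<in> edge_of n ({0..n} - {i,j})"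
    unfolding edge_of_def facets_eq[OF assms(1)] by simp
qed



definition W0 :: "nat \<Rightarrow> (nat set \<times> nat set) set" where
  "W0 n = {(s, insert 0 s) | s. s \<in> skeleton n (n-2) \<and> 0 \<notin> s \<and> card s \<le> n - 2}"

lemma W0_memE:
  assumes "p \<in> W0 n"
  obtains s where "p = (s, insert 0 s)" "s \<in> skeleton n (n-2)" "0 \<notin> s" "card s \<le> n - 2"
  using assms unfolding W0_def by blast

lemma W0_memI:
  assumes "s \<in> skeleton n (n-2)" "0 \<notin> s" "card s \<le> n - 2"
  shows "(s, insert 0 s) \<in> W0 n"
  using assms unfolding W0_def by blast

lemma W0_matching:
  assumes n: "n \<ge> 3"
  shows "is_matching (skeleton n (n-2)) (W0 n)"
  unfolding is_matching_def
proof (intro conjI ballI impI)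
  show "W0 n \<subseteq> hasse_edges (skeleton n (n-2))"
  proof
    fix p assume "p \<in> W0 n"
    then obtain s where s: "p = (s, insert 0 s)" "s \<in> skeleton n (n-2)" "0 \<notin> s" "card s \<le> n - 2"
      by (rule W0_memE)
    have s2: "s \<noteq> {}" "s \<subseteq> {0..n}" "card s \<le> n - 1" using s(2) n by (simp_all add: K_mem)
    have fs: "finite s" using s2(2) finite_subset by blast
    have c: "card (insert 0 s) = card s + 1" using fs s(3) by simp
    have "insert 0 s \<in> skeleton n (n-2)" using s2 c s(4) n by (simp add: K_mem)
    moreover have "s \<subset> insert 0 s" using s(3) by auto
    ultimately show "p \<in> hasse_edges (skeleton n (n-2))"
      using s(1,2) c unfolding hasse_edges_def by simp
  qed
next
  fix p q assume p: "p \<in> W0 n" and q: "q \<in> W0 n" and pq: "p \<noteq> q"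
  obtain s where s: "p = (s, insert 0 s)" "0 \<notin> s" using p by (rule W0_memE)
  obtain t where t: "q = (t, insert 0 t)" "0 \<notin> t" using q by (rule W0_memE)
  have st: "s \<noteq> t" using pq s t by auto
  have 1: "s \<noteq> insert 0 t" using s(2) by auto
  have 2: "insert 0 s \<noteq> t" using t(2) by auto
  have 3: "insert 0 s \<noteq> insert 0 t"
  proof
    assume "insert 0 s = insert 0 t"
    then have "insert 0 s - {0} = insert 0 t - {0}" by simp
    then show False using s(2) t(2) st by simp
  qed
  show "{fst p, snd p} \<inter> {fst q, snd q} = {}" unfolding s(1) t(1) using st 1 2 3 by simp
qed

definition phi :: "nat set \<Rightarrow> nat" where
  "phi s = card s + (if 0 \<in> s then 0 else 2)"

lemma W0_acyclic:
  assumes n: "n \<ge> 3"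
  shows "acyclic (modified_hasse (skeleton n (n-2)) (W0 n))"
proof -
  let ?K = "skeleton n (n-2)"
  have sub: "modified_hasse ?K (W0 n) \<subseteq> inv_image less_than phi"
  proof
    fix p assume p: "p \<in> modified_hasse ?K (W0 n)"
    obtain a b where ab: "p = (a,b)" by (cases p)
    have "(a,b) \<in> hasse_edges ?K - W0 n \<or> (b,a) \<in> W0 n"
      using p ab unfolding modified_hasse_def by auto
    then have "phi a < phi b"
    proof
      assume h: "(a,b) \<in> hasse_edges ?K - W0 n"
      then have h1: "a \<in> ?K" "b \<in> ?K" "a \<subset> b" "card b = card a + 1" "(a,b) \<notin> W0 n"
        unfolding hasse_edges_def by auto
      have b2: "b \<subseteq> {0..n}" "card b \<le> n - 1" using h1(2) n by (simp_all add: K_mem)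
      have fb: "finite b" using b2(1) finite_subset by blast
      show "phi a < phi b"
      proof (cases "0 \<in> a")
        case True
        then have "0 \<in> b" using h1(3) by auto
        then show ?thesis using True h1(4) unfolding phi_def by simp
      next
        case False
        show ?thesis
        proof (cases "0 \<in> b")
          case False
          then show ?thesis using \<open>0 \<notin> a\<close> h1(4) unfolding phi_def by simp
        next
          case True
          have fa: "finite a" using fb h1(3) finite_subset by auto
          have "insert 0 a \<subseteq> b" using True h1(3) by auto
          moreover have "card (insert 0 a) = card b" using fa \<open>0 \<notin> a\<close> h1(4) by simp
          ultimately have "insert 0 a = b" using fb card_subset_eq by blast
          moreover have "(a, insert 0 a) \<in> W0 n"
            using h1(1) \<open>0 \<notin> a\<close> h1(4) b2(2) by (intro W0_memI) auto
          ultimately show ?thesis using h1(5) by simp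
        qed
      qed
    next
      assume h: "(b,a) \<in> W0 n"
      then obtain s where s: "(b,a) = (s, insert 0 s)" "s \<in> ?K" "0 \<notin> s"
        by (rule W0_memE)
      have "finite s" using s(2) n by (meson K_mem finite_atLeastAtMost finite_subset)
      then show "phi a < phi b" using s unfolding phi_def by simp
    qed
    then show "p \<in> inv_image less_than phi" using ab by simp
  qed
  have "wf (inv_image less_than phi)" by simp
  then have "acyclic (inv_image less_than phi)" by (rule wf_acyclic)
  then show ?thesis using sub by (rule acyclic_subset)
qed

lemma W0_critical:
  assumes n: "n \<ge> 3"
  shows "critical (skeleton n (n-2)) (W0 n) \<subseteq> insert {0} {s. s \<subseteq> {1..n} \<and> card s = n - 1}"
proof
  let ?K = "skeleton n (n-2)"
  fix s assume s: "s \<in> critical ?K (W0 n)"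
  then have sK: "s \<in> ?K" and nm: "\<forall>p\<in>W0 n. s \<noteq> fst p \<and> s \<noteq> snd p"
    unfolding critical_def by simp_all
  have s2: "s \<noteq> {}" "s \<subseteq> {0..n}" "card s \<le> n - 1" using sK n by (simp_all add: K_mem)
  have fs: "finite s" using s2(2) finite_subset by blast
  show "s \<in> insert {0} {s. s \<subseteq> {1..n} \<and> card s = n - 1}"
  proof (cases "0 \<in> s")
    case True
    show ?thesis
    proof (cases "s = {0}")
      case True then show ?thesis by simp
    next
      case False
      let ?t = "s - {0}"
      have tne: "?t \<noteq> {}" using False \<open>0 \<in> s\<close> by auto
      have ct: "card ?t = card s - 1" using \<open>0 \<in> s\<close> by (simp add: card_Diff_singleton)
      have "?t \<subseteq> {0..n}" using s2(2) by blast
      then have "?t \<in> ?K" using tne s2 ct n by (simp add: K_mem)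
      moreover have "card ?t \<le> n - 2" using ct s2(3) by simp
      ultimately have "(?t, insert 0 ?t) \<in> W0 n" by (intro W0_memI) auto
      moreover have "insert 0 ?t = s" using \<open>0 \<in> s\<close> by auto
      ultimately have "(?t, s) \<in> W0 n" by simp
      then have "s \<noteq> snd (?t, s)" using nm by blast
      then show ?thesis by simp
    qed
  next
    case False
    show ?thesis
    proof (cases "card s \<le> n - 2")
      case True
      then have "(s, insert 0 s) \<in> W0 n" using sK False by (intro W0_memI) auto
      then have "s \<noteq> fst (s, insert 0 s)" using nm by blast
      then show ?thesis by simp
    next
      case c: False
      then have "card s = n - 1" using s2(3) by simp
      moreover have "s \<subseteq> {1..n}"
      proof
        fix x assume "x \<in> s"
        then have "x \<le> n" using s2(2) by auto
        moreover have "x \<noteq> 0" using \<open>x \<in> s\<close> False by metis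
        ultimately show "x \<in> {1..n}" by simp
      qed
      ultimately show ?thesis by simp
    qed
  qed
qed

lemma W0_card:
  assumes n: "n \<ge> 3"
  shows "card (critical (skeleton n (n-2)) (W0 n)) \<le> n + 1"
proof -
  let ?X = "{s. s \<subseteq> {1..n} \<and> card s = n - 1}"
  have cX: "card ?X = n"
  proof -
    have "card ?X = card {1..n} choose (n - 1)" by (rule n_subsets) simp
    also have "\<dots> = n choose (n - 1)" by simp
    also have "\<dots> = n choose 1" using n by (subst binomial_symmetric) auto
    finally show ?thesis by simp
  qed
  have fX: "finite (insert {0} ?X)"
  proof -
    have "?X \<subseteq> Pow {1..n}" by auto
    then show ?thesis by (simp add: finite_subset)
  qed
  have "card (critical (skeleton n (n-2)) (W0 n)) \<le> card (insert {0} ?X)"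
    using W0_critical[OF n] fX by (rule card_mono[rotated])
  also have "\<dots> \<le> card ?X + 1" using fX by (simp add: card_insert_if)
  finally show ?thesis using cX by simp
qed



lemma U_cut:
  assumes n: "n \<ge> 3" and W: "is_acyclic_matching (skeleton n (n-2)) W"
  shows "cut_cond (facets n) (edge_of n ` {u \<in> critical (skeleton n (n-2)) W. card u = n - 1})"
  unfolding cut_cond_def
proof (intro allI impI)
  fix S assume S: "S \<subseteq> facets n \<and> S \<noteq> {} \<and> S \<noteq> facets n"
  define A where "A = {0..n}"
  define K where "K = skeleton n (n-2)"
  define R where "R = modified_hasse K W"
  have n1: "n \<ge> 1" using n by simp
  have finA: "finite A" unfolding A_def by simp
  have fac: "facets n = (\<lambda>i. A - {i}) ` A" unfolding A_def using facets_eq[OF n1] .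
  have M: "is_matching K W" using W unfolding is_acyclic_matching_def K_def by simp
  have ac: "acyclic R" using W unfolding is_acyclic_matching_def K_def R_def by simp
  have Wh: "W \<subseteq> hasse_edges K" using M unfolding is_matching_def by simp
  have Kmem: "s \<in> K \<longleftrightarrow> s \<noteq> {} \<and> s \<subseteq> A \<and> card s \<le> n - 1" for s
    unfolding K_def A_def using K_mem[OF n] by simp
  have cardij: "card (A - {i,j}) = n - 1" if "i \<in> A" "j \<in> A" "i \<noteq> j" for i j
    using card_top[of i n j] that unfolding A_def by simp
  have topK: "A - {i,j} \<in> K" if "i \<in> A" "j \<in> A" "i \<noteq> j" for i j
  proof -
    have "card (A - {i,j}) = n - 1" using cardij that .
    then have "card (A - {i,j}) \<noteq> 0" using n by simp
    then have "A - {i,j} \<noteq> {}" by (metis card.empty)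
    then show ?thesis using Kmem \<open>card (A - {i,j}) = n - 1\<close> by auto
  qed
  define T where "T = {i \<in> A. A - {i} \<in> S}"
  define C where "C = {A - {i,j} | i j. i \<in> T \<and> j \<in> A \<and> j \<notin> T}"
  have TA: "T \<subseteq> A" unfolding T_def by auto
  obtain i0 where i0: "i0 \<in> T"
  proof -
    obtain F where F: "F \<in> S" using S by auto
    then have "F \<in> facets n" using S by auto
    then obtain i where "i \<in> A" "F = A - {i}" using fac by auto
    then show ?thesis using that F unfolding T_def by auto
  qed
  obtain j0 where j0: "j0 \<in> A" "j0 \<notin> T"
  proof -
    obtain G where G: "G \<in> facets n" "G \<notin> S" using S by auto
    then obtain j where "j \<in> A" "G = A - {j}" using fac by auto
    then show ?thesis using that G unfolding T_def by auto
  qed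
  have Cne: "C \<noteq> {}" using i0 j0 unfolding C_def by auto
  have "C \<subseteq> Pow A" unfolding C_def by auto
  then have Cfin: "finite C" using finA by (simp add: finite_subset)
  have key: "\<exists>u\<in>C. u \<in> critical K W"
  proof (rule ccontr)
    assume H: "\<not> (\<exists>u\<in>C. u \<in> critical K W)"
    have "\<forall>x\<in>C. \<exists>y\<in>C. (x,y) \<in> R\<^sup>+"
    proof
      fix x assume xC: "x \<in> C"
      then obtain i j where ij: "i \<in> T" "j \<in> A" "j \<notin> T" "x = A - {i,j}" unfolding C_def by auto
      have iA: "i \<in> A" using ij(1) TA by auto
      have ineq: "i \<noteq> j" using ij by auto
      have xK: "x \<in> K" using topK[OF iA ij(2) ineq] ij(4) by simp
      have cx: "card x = n - 1" using cardij[OF iA ij(2) ineq] ij(4) by simp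
      have "x \<notin> critical K W" using H xC by blast
      then have "\<not> (\<forall>p\<in>W. x \<noteq> fst p \<and> x \<noteq> snd p)" using xK unfolding critical_def by simp
      then obtain p where p: "p \<in> W" "x = fst p \<or> x = snd p" by blast
      obtain sg t where pst: "p = (sg, t)" by (cases p)
      have pe: "(sg, t) \<in> hasse_edges K" using p(1) pst Wh by auto
      then have h: "sg \<in> K" "t \<in> K" "sg \<subset> t" "card t = card sg + 1"
        unfolding hasse_edges_def by auto
      have "x \<noteq> sg"
      proof
        assume "x = sg"
        then have "card t = n" using h(4) cx n by simp
        then show False using h(2) Kmem n by auto
      qed
      then have xt: "t = x" using p(2) pst by simp
      have sgW: "(sg, x) \<in> W" using p(1) pst xt by simp
      have fx: "finite x" using xK Kmem finA finite_subset by blast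
      have fsg: "finite sg" using fx h(3) xt finite_subset by auto
      have "card (x - sg) = 1" using h(3,4) xt fsg by (simp add: card_Diff_subset psubset_imp_subset)
      then obtain k where k: "x - sg = {k}" by (rule card_1_singletonE)
      have kx: "k \<in> x" using k by auto
      have sgeq: "sg = x - {k}" using k h(3) xt by auto
      have kA: "k \<in> A" "k \<noteq> i" "k \<noteq> j" using kx ij(4) by auto
      have csg: "card sg = n - 2" using h(4) xt cx by simp
      show "\<exists>y\<in>C. (x,y) \<in> R\<^sup>+"
      proof (cases "k \<in> T")
        case True
        let ?y = "A - {k,j}"
        have yC: "?y \<in> C" unfolding C_def using True ij(2,3) by blast
        have kj: "k \<noteq> j" using kA by simp
        have yK: "?y \<in> K" using topK[OF kA(1) ij(2) kj] .
        have cy: "card ?y = card sg + 1" using cardij[OF kA(1) ij(2) kj] csg n by simp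
        have "sg \<subseteq> ?y" using sgeq ij(4) by auto
        moreover have "i \<in> ?y" using iA kA ineq by auto
        moreover have "i \<notin> sg" using sgeq ij(4) by auto
        ultimately have sub: "sg \<subset> ?y" by auto
        have "(sg, ?y) \<in> hasse_edges K" using h(1) yK sub cy unfolding hasse_edges_def by simp
        moreover have "?y \<noteq> x" using kx by auto
        ultimately have "(x, ?y) \<in> R\<^sup>+" unfolding R_def by (rule mh_step[OF M sgW])
        then show ?thesis using yC by blast
      next
        case False
        let ?y = "A - {i,k}"
        have yC: "?y \<in> C" unfolding C_def using False ij(1) kA(1) by blast
        have ik: "i \<noteq> k" using kA by simp
        have yK: "?y \<in> K" using topK[OF iA kA(1) ik] .
        have cy: "card ?y = card sg + 1" using cardij[OF iA kA(1) ik] csg n by simp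
        have "sg \<subseteq> ?y" using sgeq ij(4) by auto
        moreover have "j \<in> ?y" using ij(2) kA ineq by auto
        moreover have "j \<notin> sg" using sgeq ij(4) by auto
        ultimately have sub: "sg \<subset> ?y" by auto
        have "(sg, ?y) \<in> hasse_edges K" using h(1) yK sub cy unfolding hasse_edges_def by simp
        moreover have "?y \<noteq> x" using kx by auto
        ultimately have "(x, ?y) \<in> R\<^sup>+" unfolding R_def by (rule mh_step[OF M sgW])
        then show ?thesis using yC by blast
      qed
    qed
    then have "\<not> acyclic R" using no_acyclic_succ[OF Cfin Cne] by blast
    then show False using ac by simp
  qed
  then obtain u where u: "u \<in> C" "u \<in> critical K W" by blast
  then obtain i j where ij: "i \<in> T" "j \<in> A" "j \<notin> T" "u = A - {i,j}" unfolding C_def by auto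
  have iA: "i \<in> A" using ij(1) TA by auto
  have ineq: "i \<noteq> j" using ij by auto
  have cu: "card u = n - 1" using cardij[OF iA ij(2) ineq] ij(4) by simp
  have uU: "u \<in> {u \<in> critical (skeleton n (n-2)) W. card u = n - 1}" using u(2) cu unfolding K_def by simp
  have e: "edge_of n u = {A - {i}, A - {j}}"
    using edge_of_rep[OF n1, of i j] iA ij(2,4) ineq unfolding A_def by simp
  have a: "A - {i} \<in> S" using ij(1) unfolding T_def by simp
  have b: "A - {j} \<in> facets n - S" using fac ij(2,3) unfolding T_def by auto
  have "{A - {i}, A - {j}} \<in> edge_of n ` {u \<in> critical (skeleton n (n-2)) W. card u = n - 1}"
    by (rule image_eqI[where f="edge_of n" and x=u]) (simp_all only: e uU)
  then show "\<exists>a\<in>S. \<exists>b\<in>facets n - S. {a, b} \<in> edge_of n ` {u \<in> critical (skeleton n (n-2)) W. card u = n - 1}"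
    using a b by blast
qed



lemma top_facts:
  assumes n: "n \<ge> 3" and u: "u \<subseteq> {0..n}" "card u = n - 1"
  shows "\<Inter> (edge_of n u) = u" "edge_of n u \<subseteq> facets n" "card (edge_of n u) = 2"
proof -
  have n1: "n \<ge> 1" using n by simp
  obtain i j where ij: "i \<le> n" "j \<le> n" "i \<noteq> j" "u = {0..n} - {i,j}"
    using top_rep[OF n1 u] by blast
  have e: "edge_of n u = {{0..n} - {i}, {0..n} - {j}}"
    unfolding ij(4) by (rule edge_of_rep[OF n1 ij(1-3)])
  have "\<Inter> (edge_of n u) = ({0..n} - {i}) \<inter> ({0..n} - {j})" unfolding e by simp
  also have "\<dots> = {0..n} - {i,j}" by blast
  finally show "\<Inter> (edge_of n u) = u" unfolding ij(4) .
  have fi: "{0..n} - {i} \<in> facets n" unfolding facets_eq[OF n1]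
    by (rule image_eqI[where x=i]) (simp_all add: ij(1))
  have fj: "{0..n} - {j} \<in> facets n" unfolding facets_eq[OF n1]
    by (rule image_eqI[where x=j]) (simp_all add: ij(2))
  show "edge_of n u \<subseteq> facets n" unfolding e using fi fj by blast
  have neq: "{0..n} - {i} \<noteq> {0..n} - {j}"
  proof
    assume eq: "{0..n} - {i} = {0..n} - {j}"
    have "i \<in> {0..n} - {j}" using ij(1,3) by simp
    then have "i \<in> {0..n} - {i}" unfolding eq .
    then show False by simp
  qed
  show "card (edge_of n u) = 2" unfolding e using neq by simp
qed

theorem mainTheorem3:
  fixes n :: nat and W :: "(nat set \<times> nat set) set"
  assumes "n \<ge> 3"
    and "is_optimal_matching (skeleton n (n - 2)) W"
  defines "U \<equiv> {u \<in> critical (skeleton n (n - 2)) W. card u = n - 1}"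
  shows "card U = n \<and> is_spanning_tree (facets n) (edge_of n ` U)"
proof -
  let ?K = "skeleton n (n - 2)"
  have n: "n \<ge> 3" by fact
  have n1: "n \<ge> 1" using n by simp
  have W: "is_acyclic_matching ?K W" using assms(2) unfolding is_optimal_matching_def by simp
  have W0ac: "is_acyclic_matching ?K (W0 n)"
    unfolding is_acyclic_matching_def using W0_matching[OF n] W0_acyclic[OF n] by simp
  have "card (critical ?K W) \<le> card (critical ?K (W0 n))"
    using assms(2) W0ac unfolding is_optimal_matching_def by blast
  then have le: "card (critical ?K W) \<le> n + 1" using W0_card[OF n] by simp
  obtain v where v: "v \<in> {0..n}" "{v} \<in> critical ?K W" using vertex_critical[OF n W] by blast
  have cK: "critical ?K W \<subseteq> ?K" unfolding critical_def by blast
  have KP: "?K \<subseteq> Pow {0..n}" unfolding skeleton_def simplex_full_def by blast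
  have "finite (Pow {0..n})" by simp
  then have "finite ?K" using KP by (rule finite_subset[rotated])
  then have fc: "finite (critical ?K W)" using cK by (rule finite_subset[rotated])
  have Usub: "insert {v} U \<subseteq> critical ?K W" using v(2) unfolding U_def by blast
  have vU: "{v} \<notin> U"
  proof
    assume "{v} \<in> U"
    then have "card {v} = n - 1" unfolding U_def by simp
    then show False using n by simp
  qed
  have fU: "finite U" using fc unfolding U_def by simp
  have "card (insert {v} U) \<le> card (critical ?K W)" using Usub fc by (rule card_mono[rotated])
  then have Ule: "card U \<le> n" using le vU fU by simp
  have Ufacts: "u \<subseteq> {0..n}" "card u = n - 1" if "u \<in> U" for u
  proof -
    have "u \<in> ?K" using that unfolding U_def critical_def by simp
    then show "u \<subseteq> {0..n}" using n by (simp add: K_mem)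
    show "card u = n - 1" using that unfolding U_def by simp
  qed
  have inj: "inj_on (edge_of n) U"
  proof (rule inj_onI)
    fix x y assume xy: "x \<in> U" "y \<in> U" "edge_of n x = edge_of n y"
    have "x = \<Inter> (edge_of n x)" using top_facts(1)[OF n Ufacts[OF xy(1)]] by simp
    also have "\<dots> = \<Inter> (edge_of n y)" using xy(3) by simp
    also have "\<dots> = y" using top_facts(1)[OF n Ufacts[OF xy(2)]] by simp
    finally show "x = y" .
  qed
  have cardE: "card (edge_of n ` U) = card U" using inj by (rule card_image)
  have graph: "is_graph (facets n) (edge_of n ` U)"
    unfolding is_graph_def
  proof
    fix e assume "e \<in> edge_of n ` U"
    then obtain u where u: "u \<in> U" "e = edge_of n u" by (rule imageE)
    show "e \<subseteq> facets n \<and> card e = 2"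
      using top_facts(2,3)[OF n Ufacts[OF u(1)]] u(2) by simp
  qed
  have cut: "cut_cond (facets n) (edge_of n ` U)" unfolding U_def using U_cut[OF n W] by simp
  have finF: "finite (facets n)" unfolding facets_eq[OF n1] by simp
  have cF: "card (facets n) = n + 1"
  proof -
    have "inj_on (\<lambda>i. {0..n} - {i}) {0..n}"
    proof (rule inj_onI)
      fix a b assume ab: "a \<in> {0..n}" "b \<in> {0..n}" "{0..n} - {a} = {0..n} - {b}"
      show "a = b"
      proof (rule ccontr)
        assume "a \<noteq> b"
        then have "a \<in> {0..n} - {b}" using ab(1) by simp
        then have "a \<in> {0..n} - {a}" by (simp only: ab(3))
        then show False by simp
      qed
    qed
    then show ?thesis unfolding facets_eq[OF n1] by (simp add: card_image)
  qed
  have "card (facets n) \<le> card (edge_of n ` U) + 1" using cut_card[OF finF graph cut] .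
  then have cU: "card U = n" using cF cardE Ule by simp
  have conn: "graph_connected (facets n) (edge_of n ` U)" using cut_connected[OF cut] .
  have nc: "\<not> has_cycle (edge_of n ` U)" using cut_no_cycle[OF finF graph cut] cF cardE cU by simp
  show ?thesis using cU graph conn nc unfolding is_spanning_tree_def by simp
qed


end
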